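(* Let $\mathcal{M}$ be any submonoid of $\mathcal{R}$ that contains $f_p$ for infinitely many primes $p$. Then $\mathcal{M}$ is not finitely generated.
   Context: $\mathcal{R}$ is the group of rational homeomorphisms of $\{0,1\}^\omega$: those $f$ for which there is a finite asynchronous binary transducer $(S,s_0,t,o)$ ($S$ finite, $t\colon S\times\{0,1\}\to S$, $o\colon S\times\{0,1\}\to\{0,1\}^*$) with $f(\psi)=o(s_0,\psi)$, where for $\sigma_1\sigma_2\cdots$ one sets $s_1=s_0$, $s_{n+1}=t(s_n,\sigma_n)$ and $o(s_0,\sigma_1\sigma_2\cdots)=o(s_1,\sigma_1)o(s_2,\sigma_2)\cdots$. For a prime $p$, $f_p\in\mathcal{R}$ is the homeomorphism that switches every $p$-th digit of a binary sequence (the digits in positions $p,2p,3p,\ldots$) and leaves the remaining digits unchanged. *)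

theory Defs
  imports "HOL-Analysis.Analysis" "HOL-Computational_Algebra.Primes"
begin

text \<open>Binary sequences \<open>{0,1}^\<omega>\<close> are modelled as \<open>nat \<Rightarrow> bool\<close> (digit \<open>i+1\<close> of the
  sequence is the value at index \<open>i\<close>), with the product topology of the discrete
  space bool (library instance).\<close>

fun trans_state :: "(nat \<Rightarrow> bool \<Rightarrow> nat) \<Rightarrow> nat \<Rightarrow> (nat \<Rightarrow> bool) \<Rightarrow> nat \<Rightarrow> nat" where
  "trans_state t s0 \<psi> 0 = s0"
| "trans_state t s0 \<psi> (Suc n) = t (trans_state t s0 \<psi> n) (\<psi> n)"

definition trans_out_prefix ::
  "(nat \<Rightarrow> bool \<Rightarrow> nat) \<Rightarrow> (nat \<Rightarrow> bool \<Rightarrow> bool list) \<Rightarrow> nat \<Rightarrow> (nat \<Rightarrow> bool) \<Rightarrow> nat \<Rightarrow> bool list" where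
  "trans_out_prefix t out s0 \<psi> n = concat (map (\<lambda>i. out (trans_state t s0 \<psi> i) (\<psi> i)) [0..<n])"

text \<open>f(\<psi>) equals the infinite word o(s0,\<psi>): the concatenated outputs are infinite
  and every finite partial concatenation is a prefix of f(\<psi>).\<close>
definition transducer_computes ::
  "nat set \<Rightarrow> nat \<Rightarrow> (nat \<Rightarrow> bool \<Rightarrow> nat) \<Rightarrow> (nat \<Rightarrow> bool \<Rightarrow> bool list) \<Rightarrow> ((nat \<Rightarrow> bool) \<Rightarrow> (nat \<Rightarrow> bool)) \<Rightarrow> bool" where
  "transducer_computes S s0 t out f \<longleftrightarrow>
     finite S \<and> s0 \<in> S \<and> (\<forall>s\<in>S. \<forall>b. t s b \<in> S) \<and>
     (\<forall>\<psi>. (\<forall>k. \<exists>n. k \<le> length (trans_out_prefix t out s0 \<psi> n)) \<and>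
          (\<forall>n. \<forall>i < length (trans_out_prefix t out s0 \<psi> n). f \<psi> i = trans_out_prefix t out s0 \<psi> n ! i))"

definition rational_homeos :: "((nat \<Rightarrow> bool) \<Rightarrow> (nat \<Rightarrow> bool)) set" where
  "rational_homeos = {f. (\<exists>g. homeomorphism UNIV UNIV f g) \<and>
      (\<exists>S s0 t out. transducer_computes S s0 t out f)}"

text \<open>f_p switches the digits in positions p, 2p, 3p, ... (1-based), i.e. indices i with p dvd i+1.\<close>
definition switch_every :: "nat \<Rightarrow> (nat \<Rightarrow> bool) \<Rightarrow> (nat \<Rightarrow> bool)" where
  "switch_every p \<psi> = (\<lambda>i. if p dvd (i + 1) then \<not> \<psi> i else \<psi> i)"

definition is_submonoid_of_R :: "((nat \<Rightarrow> bool) \<Rightarrow> (nat \<Rightarrow> bool)) set \<Rightarrow> bool" where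
  "is_submonoid_of_R M \<longleftrightarrow> M \<subseteq> rational_homeos \<and> id \<in> M \<and> (\<forall>f\<in>M. \<forall>g\<in>M. f \<circ> g \<in> M)"

inductive_set monoid_generated :: "('a \<Rightarrow> 'a) set \<Rightarrow> ('a \<Rightarrow> 'a) set" for G where
  gen_id: "id \<in> monoid_generated G"
| gen_comp: "g \<in> G \<Longrightarrow> h \<in> monoid_generated G \<Longrightarrow> g \<circ> h \<in> monoid_generated G"

definition finitely_generated_monoid :: "('a \<Rightarrow> 'a) set \<Rightarrow> bool" where
  "finitely_generated_monoid M \<longleftrightarrow> (\<exists>G. finite G \<and> G \<subseteq> M \<and> monoid_generated G = M)"

end

theory Submission
  imports Defs
begin


definition conc :: "bool list \<Rightarrow> (nat \<Rightarrow> bool) \<Rightarrow> (nat \<Rightarrow> bool)" where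
  "conc xs \<psi> = (\<lambda>i. if i < length xs then xs ! i else \<psi> (i - length xs))"

definition pw :: "'a list \<Rightarrow> nat \<Rightarrow> 'a list" where
  "pw v a = concat (replicate a v)"

definition smooth :: "nat \<Rightarrow> nat \<Rightarrow> bool" where
  "smooth N a \<longleftrightarrow> (\<forall>q. prime q \<longrightarrow> q dvd a \<longrightarrow> q \<le> N)"

definition Rel :: "((nat \<Rightarrow> bool) \<Rightarrow> (nat \<Rightarrow> bool)) \<Rightarrow> bool list \<Rightarrow> bool list \<Rightarrow> bool list \<Rightarrow> bool list \<Rightarrow> bool" where
  "Rel f X P Y Q \<longleftrightarrow> (\<forall>\<psi>. \<exists>T. f (conc X \<psi>) = conc Y T \<and> f (conc (X @ P) \<psi>) = conc (Y @ Q) T)"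

definition Good :: "nat \<Rightarrow> ((nat \<Rightarrow> bool) \<Rightarrow> (nat \<Rightarrow> bool)) \<Rightarrow> bool" where
  "Good N f \<longleftrightarrow> (\<forall>U v. v \<noteq> [] \<longrightarrow> (\<exists>m a b U' w. 0 < a \<and> 0 < b \<and> smooth N a \<and> w \<noteq> [] \<and>
      Rel f (U @ pw v m) (pw v a) U' (pw w b)))"

lemma conc_append: "conc (xs @ ys) \<psi> = conc xs (conc ys \<psi>)"
  by (auto simp: conc_def nth_append fun_eq_iff)

lemma conc_inj: "conc xs S = conc xs T \<Longrightarrow> S = T"
proof
  fix i assume "conc xs S = conc xs T"
  then have "conc xs S (length xs + i) = conc xs T (length xs + i)" by simp
  then show "S i = T i" by (simp add: conc_def)
qed

lemma pw_add: "pw v (x + y) = pw v x @ pw v y"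
  by (simp add: pw_def replicate_add)


lemma pw_Suc: "pw v (Suc j) = v @ pw v j"
  by (simp add: pw_def)

lemma pw_mult: "pw (pw v a) j = pw v (a * j)"
  by (induction j) (simp_all add: pw_def[of _ 0] pw_Suc pw_add[symmetric])

lemma pw_one: "pw v 1 = v"
  by (simp add: pw_def)

lemma pw_ne: "v \<noteq> [] \<Longrightarrow> 0 < a \<Longrightarrow> pw v a \<noteq> []"
  by (cases a) (auto simp: pw_def)

lemma smooth_mono: "smooth N a \<Longrightarrow> N \<le> N' \<Longrightarrow> smooth N' a"
  by (auto simp: smooth_def)

lemma smooth_mult: "smooth N a \<Longrightarrow> smooth N c \<Longrightarrow> smooth N (a * c)"
  unfolding smooth_def by (meson prime_dvd_mult_iff)

lemma smooth_le: "0 < a \<Longrightarrow> a \<le> N \<Longrightarrow> smooth N a"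
  unfolding smooth_def by (meson dvd_imp_le le_trans)

lemma Rel_iter:
  assumes "Rel f X P Y Q"
  shows "Rel f X (pw P j) Y (pw Q j)"
proof (induction j)
  case 0
  then show ?case using assms by (auto simp: Rel_def pw_def)
next
  case (Suc j)
  show ?case unfolding Rel_def
  proof
    fix \<psi>
    from Suc[unfolded Rel_def] obtain T where T1: "f (conc X \<psi>) = conc Y T"
      and T2: "f (conc (X @ pw P j) \<psi>) = conc (Y @ pw Q j) T" by blast
    from assms[unfolded Rel_def] obtain T' where T'1: "f (conc X (conc (pw P j) \<psi>)) = conc Y T'"
      and T'2: "f (conc (X @ P) (conc (pw P j) \<psi>)) = conc (Y @ Q) T'" by blast
    have "conc Y T' = conc Y (conc (pw Q j) T)"
      using T'1 T2 by (simp add: conc_append)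
    then have "T' = conc (pw Q j) T" by (rule conc_inj)
    then show "\<exists>T. f (conc X \<psi>) = conc Y T \<and> f (conc (X @ pw P (Suc j)) \<psi>) = conc (Y @ pw Q (Suc j)) T"
      using T1 T'2 by (auto simp: pw_Suc conc_append)
  qed
qed

lemma Rel_unique:
  assumes "f (conc X \<psi>) = conc Y T" "f (conc X \<psi>) = conc Y T'" shows "T = T'"
  using assms conc_inj by metis

lemma Good_id: "Good N id"
  unfolding Good_def
proof (intro allI impI)
  fix U :: "bool list" and v :: "bool list" assume "v \<noteq> []"
  have "Rel id (U @ pw v 0) (pw v 1) U (pw v 1)"
    by (auto simp: Rel_def pw_def)
  moreover have "smooth N 1" by (auto simp: smooth_def)
  ultimately show "\<exists>m a b U' w. 0 < a \<and> 0 < b \<and> smooth N a \<and> w \<noteq> [] \<and> Rel id (U @ pw v m) (pw v a) U' (pw w b)"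
    using \<open>v \<noteq> []\<close> by blast
qed

lemma RelE:
  assumes "Rel f X P Y Q"
  obtains T where "f (conc X \<psi>) = conc Y T" "f (conc (X @ P) \<psi>) = conc (Y @ Q) T"
proof -
  from assms[unfolded Rel_def, rule_format, of \<psi>] obtain T where "f (conc X \<psi>) = conc Y T \<and> f (conc (X @ P) \<psi>) = conc (Y @ Q) T" ..
  then show thesis using that by blast
qed

lemma GoodE:
  assumes "Good N f" "v \<noteq> []"
  obtains m a b U' w where "0 < a" "0 < b" "smooth N a" "w \<noteq> []" "Rel f (U @ pw v m) (pw v a) U' (pw w b)"
proof -
  have "\<exists>m a b U' w. 0 < a \<and> 0 < b \<and> smooth N a \<and> w \<noteq> [] \<and> Rel f (U @ pw v m) (pw v a) U' (pw w b)"
    using assms(1)[unfolded Good_def, rule_format, OF assms(2)] .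
  then show thesis by (elim exE conjE) (rule that)
qed

lemma Good_comp:
  assumes f: "Good N f" and g: "Good N g"
  shows "Good N (f \<circ> g)"
  unfolding Good_def
proof (intro allI impI)
  fix U v :: "bool list" assume v: "v \<noteq> []"
  obtain m a b U' w where
    a: "0 < a" and b: "0 < b" and sa: "smooth N a" and w: "w \<noteq> []"
    and rg: "Rel g (U @ pw v m) (pw v a) U' (pw w b)" by (rule GoodE[OF g v, of U])
  obtain m' c d U'' w' where
    c: "0 < c" and d: "0 < d" and sc: "smooth N c" and w': "w' \<noteq> []"
    and rf: "Rel f (U' @ pw w m') (pw w c) U'' (pw w' d)" by (rule GoodE[OF f w, of U'])
  define X0 where "X0 = U @ pw v m"
  have rgj: "\<And>j. Rel g X0 (pw v (a * j)) U' (pw w (b * j))"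
    using Rel_iter[OF rg] by (simp add: pw_mult X0_def)
  have rfb: "Rel f (U' @ pw w m') (pw w (c * b)) U'' (pw w' (d * b))"
    using Rel_iter[OF rf, of b] by (simp add: pw_mult)
  have R: "Rel (f \<circ> g) (U @ pw v (m + a * m')) (pw v (a * c)) U'' (pw w' (b * d))"
    unfolding Rel_def
  proof
    fix \<psi>
    obtain T1 where A1: "g (conc X0 \<psi>) = conc U' T1"
      and B1: "g (conc (X0 @ pw v (a * m')) \<psi>) = conc (U' @ pw w (b * m')) T1"
      by (rule RelE[OF rgj[of m']])
    obtain T2 where A2: "g (conc X0 \<psi>) = conc U' T2"
      and B2: "g (conc (X0 @ pw v (a * (m' + c))) \<psi>) = conc (U' @ pw w (b * (m' + c))) T2"
      by (rule RelE[OF rgj[of "m' + c"]])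
    have "T1 = T2" using trans[OF sym[OF A1] A2] by (rule conc_inj)
    define \<phi> where "\<phi> = conc (pw w (b * m' - m')) T1"
    have mle: "m' \<le> b * m'" using b by (cases b) auto
    have e1: "pw w (b * m') = pw w m' @ pw w (b * m' - m')"
      using mle by (simp add: pw_add[symmetric])
    have ar: "b * (m' + c) = m' + (c * b + (b * m' - m'))"
    proof -
      have "b * (m' + c) = b * m' + c * b" by (simp add: algebra_simps)
      also have "\<dots> = m' + (c * b + (b * m' - m'))" using mle by linarith
      finally show ?thesis .
    qed
    have e2: "pw w (b * (m' + c)) = pw w m' @ pw w (c * b) @ pw w (b * m' - m')"
      unfolding ar pw_add by simp
    have G1: "g (conc (U @ pw v (m + a * m')) \<psi>) = conc (U' @ pw w m') \<phi>"
      using B1 e1 by (simp add: X0_def pw_add conc_append \<phi>_def)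
    have G2: "g (conc (U @ pw v (m + a * m') @ pw v (a * c)) \<psi>) = conc ((U' @ pw w m') @ pw w (c * b)) \<phi>"
    proof -
      have "U @ pw v (m + a * m') @ pw v (a * c) = X0 @ pw v (a * (m' + c))"
        by (simp add: X0_def pw_add[symmetric] algebra_simps)
      then show ?thesis using B2 e2 \<open>T1 = T2\<close> by (simp add: conc_append \<phi>_def)
    qed
    obtain T3 where F1: "f (conc (U' @ pw w m') \<phi>) = conc U'' T3"
      and F2: "f (conc ((U' @ pw w m') @ pw w (c * b)) \<phi>) = conc (U'' @ pw w' (d * b)) T3"
      by (rule RelE[OF rfb])
    show "\<exists>T. (f \<circ> g) (conc (U @ pw v (m + a * m')) \<psi>) = conc U'' T \<and>
          (f \<circ> g) (conc ((U @ pw v (m + a * m')) @ pw v (a * c)) \<psi>) = conc (U'' @ pw w' (b * d)) T"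
      apply (rule exI[of _ T3])
      using F1 F2 G1 G2 by (simp add: mult.commute[of b d])
  qed
  have P: "0 < a * c" "0 < b * d" "smooth N (a * c)" using a c b d sa sc smooth_mult by auto
  show "\<exists>m a b U' w. 0 < a \<and> 0 < b \<and> smooth N a \<and> w \<noteq> [] \<and> Rel (f \<circ> g) (U @ pw v m) (pw v a) U' (pw w b)"
    apply (rule exI[of _ "m + a * m'"])
    apply (rule exI[of _ "a * c"])
    apply (rule exI[of _ "b * d"])
    apply (rule exI[of _ U''])
    apply (rule exI[of _ w'])
    using P w' R by simp
qed



lemma ts_cong: "(\<forall>i<n. \<psi> i = \<psi>' i) \<Longrightarrow> trans_state t s \<psi> n = trans_state t s \<psi>' n"
  by (induction n) auto

lemma ts_add: "trans_state t s \<psi> (n + k) = trans_state t (trans_state t s \<psi> n) (\<lambda>i. \<psi> (n + i)) k"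
  by (induction k) auto

lemma top_Suc: "trans_out_prefix t out s \<psi> (Suc n) = trans_out_prefix t out s \<psi> n @ out (trans_state t s \<psi> n) (\<psi> n)"
  by (simp add: trans_out_prefix_def)

lemma top_cong: "(\<forall>i<n. \<psi> i = \<psi>' i) \<Longrightarrow> trans_out_prefix t out s \<psi> n = trans_out_prefix t out s \<psi>' n"
proof (induction n)
  case 0 then show ?case by (simp add: trans_out_prefix_def)
next
  case (Suc n)
  have "trans_state t s \<psi> n = trans_state t s \<psi>' n" using Suc.prems by (intro ts_cong) auto
  then show ?case using Suc by (simp add: top_Suc)
qed

lemma top_add: "trans_out_prefix t out s \<psi> (n + k) = trans_out_prefix t out s \<psi> n @ trans_out_prefix t out (trans_state t s \<psi> n) (\<lambda>i. \<psi> (n + i)) k"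
proof (induction k)
  case 0 then show ?case by (simp add: trans_out_prefix_def)
next
  case (Suc k)
  have "trans_out_prefix t out s \<psi> (n + Suc k) = trans_out_prefix t out s \<psi> (Suc (n + k))" by simp
  also have "\<dots> = trans_out_prefix t out s \<psi> (n + k) @ out (trans_state t s \<psi> (n + k)) (\<psi> (n + k))"
    by (rule top_Suc)
  also have "\<dots> = trans_out_prefix t out s \<psi> n @ trans_out_prefix t out (trans_state t s \<psi> n) (\<lambda>i. \<psi> (n + i)) (Suc k)"
    using Suc by (simp add: top_Suc ts_add)
  finally show ?case .
qed

lemma top_len_mono: "n \<le> n' \<Longrightarrow> length (trans_out_prefix t out s \<psi> n) \<le> length (trans_out_prefix t out s \<psi> n')"
  using top_add[of t out s \<psi> n "n' - n"] by simp

lemma ts_in: "s \<in> S \<Longrightarrow> (\<forall>s\<in>S. \<forall>b. t s b \<in> S) \<Longrightarrow> trans_state t s \<psi> n \<in> S"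
  by (induction n) auto

lemma conc_shift: "(\<lambda>i. conc X \<psi> (length X + i)) = \<psi>"
  by (simp add: conc_def)

lemma conc_low: "\<forall>i<length X. conc X \<psi> i = conc X \<psi>' i"
  by (simp add: conc_def)

definition st where "st t s0 X = trans_state t s0 (conc X (\<lambda>_. False)) (length X)"
definition pr where "pr t out s0 X = trans_out_prefix t out s0 (conc X (\<lambda>_. False)) (length X)"

lemma st_eq: "trans_state t s0 (conc X \<psi>) (length X) = st t s0 X"
  unfolding st_def by (rule ts_cong[OF conc_low])

lemma pr_eq: "trans_out_prefix t out s0 (conc X \<psi>) (length X) = pr t out s0 X"
  unfolding pr_def by (rule top_cong[OF conc_low])

lemma ts_conc: "trans_state t s0 (conc X \<psi>) (length X + k) = trans_state t (st t s0 X) \<psi> k"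
  using ts_add[of t s0 "conc X \<psi>" "length X" k] by (simp add: st_eq conc_shift)

lemma top_conc: "trans_out_prefix t out s0 (conc X \<psi>) (length X + k) = pr t out s0 X @ trans_out_prefix t out (st t s0 X) \<psi> k"
  using top_add[of t out s0 "conc X \<psi>" "length X" k] by (simp add: st_eq pr_eq conc_shift)

lemma st_app: "st t s0 (A @ B) = trans_state t (st t s0 A) (conc B (\<lambda>_. False)) (length B)"
  using ts_conc[of t s0 A "conc B (\<lambda>_. False)" "length B"] st_eq[of t s0 "A @ B" "\<lambda>_. False"]
  by (simp add: conc_append)

lemma pr_app: "pr t out s0 (A @ B) = pr t out s0 A @ trans_out_prefix t out (st t s0 A) (conc B (\<lambda>_. False)) (length B)"
  using top_conc[of t out s0 A "conc B (\<lambda>_. False)" "length B"] pr_eq[of t out s0 "A @ B" "\<lambda>_. False"]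
  by (simp add: conc_append)

lemma computes_at:
  assumes "transducer_computes S s0 t out f" "i < length (trans_out_prefix t out s0 \<psi> n)"
  shows "f \<psi> i = trans_out_prefix t out s0 \<psi> n ! i"
  using assms unfolding transducer_computes_def by blast

lemma computes_prefix:
  assumes "transducer_computes S s0 t out f" "j < length (pr t out s0 Z)"
  shows "f (conc Z \<psi>) j = pr t out s0 Z ! j"
  using assms pr_eq[of t out s0 Z \<psi>] unfolding transducer_computes_def by metis

lemma computes_tail:
  assumes c: "transducer_computes S s0 t out f"
  shows "\<exists>k. f (conc Z \<psi>) (length (pr t out s0 Z) + i) = trans_out_prefix t out (st t s0 Z) \<psi> k ! i
              \<and> i < length (trans_out_prefix t out (st t s0 Z) \<psi> k)"
proof -
  from c obtain n where n: "length (pr t out s0 Z) + i + 1 \<le> length (trans_out_prefix t out s0 (conc Z \<psi>) n)"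
    unfolding transducer_computes_def by blast
  have "length (trans_out_prefix t out s0 (conc Z \<psi>) n) \<le> length (trans_out_prefix t out s0 (conc Z \<psi>) (length Z + n))"
    by (rule top_len_mono) simp
  then have lt: "i < length (trans_out_prefix t out (st t s0 Z) \<psi> n)"
    using n by (simp add: top_conc)
  have "f (conc Z \<psi>) (length (pr t out s0 Z) + i) = trans_out_prefix t out s0 (conc Z \<psi>) (length Z + n) ! (length (pr t out s0 Z) + i)"
    using computes_at[OF c, of "length (pr t out s0 Z) + i" "conc Z \<psi>" "length Z + n"] lt by (simp add: top_conc)
  also have "\<dots> = trans_out_prefix t out (st t s0 Z) \<psi> n ! i"
    by (simp add: top_conc)
  finally show ?thesis using lt by blast
qed

lemma computes_tail2:
  assumes c: "transducer_computes S s0 t out f"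
  and "i < length (trans_out_prefix t out (st t s0 Z) \<psi> k)"
  shows "f (conc Z \<psi>) (length (pr t out s0 Z) + i) = trans_out_prefix t out (st t s0 Z) \<psi> k ! i"
proof -
  have "f (conc Z \<psi>) (length (pr t out s0 Z) + i) = trans_out_prefix t out s0 (conc Z \<psi>) (length Z + k) ! (length (pr t out s0 Z) + i)"
    using computes_at[OF c, of "length (pr t out s0 Z) + i" "conc Z \<psi>" "length Z + k"] assms(2) by (simp add: top_conc)
  also have "\<dots> = trans_out_prefix t out (st t s0 Z) \<psi> k ! i"
    by (simp add: top_conc)
  finally show ?thesis .
qed

lemma conc_split: "F = conc P (\<lambda>i. F (length P + i)) \<longleftrightarrow> (\<forall>j<length P. F j = P ! j)"
  by (auto simp: conc_def fun_eq_iff)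

lemma same_state:
  assumes c: "transducer_computes S s0 t out f" and eq: "st t s0 X = st t s0 Y"
  shows "\<exists>T. f (conc X \<psi>) = conc (pr t out s0 X) T \<and> f (conc Y \<psi>) = conc (pr t out s0 Y) T"
proof -
  define T where "T = (\<lambda>i. f (conc X \<psi>) (length (pr t out s0 X) + i))"
  have TY: "T = (\<lambda>i. f (conc Y \<psi>) (length (pr t out s0 Y) + i))"
  proof
    fix i
    obtain k where k: "T i = trans_out_prefix t out (st t s0 X) \<psi> k ! i"
      "i < length (trans_out_prefix t out (st t s0 X) \<psi> k)"
      using computes_tail[OF c, of X \<psi> i] unfolding T_def by blast
    show "T i = f (conc Y \<psi>) (length (pr t out s0 Y) + i)"
      using computes_tail2[OF c, of i Y \<psi> k] k eq by simp
  qed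
  have "f (conc X \<psi>) = conc (pr t out s0 X) T"
    unfolding T_def by (simp add: conc_split computes_prefix[OF c])
  moreover have "f (conc Y \<psi>) = conc (pr t out s0 Y) T"
    unfolding TY by (simp add: conc_split computes_prefix[OF c])
  ultimately show ?thesis by blast
qed



lemma len_pw: "length (pw v n) = n * length v"
  by (induction n) (auto simp: pw_Suc pw_def)

lemma pw_one'[simp]: "pw v (Suc 0) = v"
  by (simp add: pw_def)

lemma pw_Suc2: "pw v (Suc j) = pw v j @ v"
proof -
  have "pw v (Suc 0) = v" by (simp add: pw_def)
  then show ?thesis using pw_add[of v j 1] by simp
qed

definition cyc :: "bool list \<Rightarrow> nat \<Rightarrow> bool" where
  "cyc Z = (\<lambda>i. Z ! (i mod length Z))"

lemma conc_cyc: "Z \<noteq> [] \<Longrightarrow> conc Z (cyc Z) = cyc Z"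
  by (auto simp: conc_def cyc_def fun_eq_iff le_mod_geq)

lemma conc_pw_cyc: "Z \<noteq> [] \<Longrightarrow> conc (pw Z j) (cyc Z) = cyc Z"
  by (induction j) (auto simp: pw_Suc conc_append conc_cyc, simp add: pw_def conc_def)

lemma cycle_nonempty:
  assumes c: "transducer_computes S s0 t out f" and Z: "Z \<noteq> []"
    and eq: "st t s0 (X @ Z) = st t s0 X"
  shows "trans_out_prefix t out (st t s0 X) (conc Z (\<lambda>_. False)) (length Z) \<noteq> []"
proof
  assume C: "trans_out_prefix t out (st t s0 X) (conc Z (\<lambda>_. False)) (length Z) = []"
  have inv: "st t s0 (X @ pw Z j) = st t s0 X \<and> pr t out s0 (X @ pw Z j) = pr t out s0 X" for j
  proof (induction j)
    case 0 then show ?case by (simp add: pw_def)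
  next
    case (Suc j)
    have e: "X @ pw Z (Suc j) = (X @ pw Z j) @ Z" by (simp add: pw_Suc2)
    have "st t s0 (X @ pw Z (Suc j)) = st t s0 (X @ Z)"
      unfolding e st_app[of t s0 "X @ pw Z j" Z] st_app[of t s0 X Z] using Suc by simp
    moreover have "pr t out s0 (X @ pw Z (Suc j)) = pr t out s0 X"
      unfolding e pr_app[of t out s0 "X @ pw Z j" Z] using Suc C by simp
    ultimately show ?case using eq by simp
  qed
  define chi0 where "chi0 = cyc Z"
  from c obtain n where n: "length (pr t out s0 X) + 1 \<le> length (trans_out_prefix t out s0 (conc X chi0) n)"
    unfolding transducer_computes_def by blast
  have ln: "n \<le> length (X @ pw Z n)"
  proof -
    have "1 \<le> length Z" using Z by (cases Z) auto
    then have m1: "n * 1 \<le> n * length Z" by (rule mult_le_mono2)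
    have l: "length (X @ pw Z n) = length X + n * length Z" by (simp add: len_pw)
    show ?thesis using l m1 by linarith
  qed
  have "conc X chi0 = conc (X @ pw Z n) chi0"
    by (simp add: conc_append chi0_def conc_pw_cyc[OF Z])
  then have "trans_out_prefix t out s0 (conc X chi0) (length (X @ pw Z n)) = pr t out s0 X"
    using pr_eq[of t out s0 "X @ pw Z n" chi0] inv[of n] by simp
  moreover have "length (trans_out_prefix t out s0 (conc X chi0) n) \<le> length (trans_out_prefix t out s0 (conc X chi0) (length (X @ pw Z n)))"
    by (rule top_len_mono[OF ln])
  ultimately show False using n by simp
qed

lemma computes_good:
  assumes c: "transducer_computes S s0 t out f"
  shows "Good (card S) f"
  unfolding Good_def
proof (intro allI impI)
  fix U v :: "bool list" assume v: "v \<noteq> []"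
  define n where "n = card S"
  have fin: "finite S" and s0: "s0 \<in> S" and cl: "\<forall>s\<in>S. \<forall>b. t s b \<in> S"
    using c unfolding transducer_computes_def by auto
  define stf where "stf j = st t s0 (U @ pw v j)" for j
  have "stf ` {..n} \<subseteq> S" unfolding stf_def st_def using ts_in[OF s0 cl] by blast
  then have "card (stf ` {..n}) \<le> n" unfolding n_def by (rule card_mono[OF fin])
  then have "\<not> inj_on stf {..n}" by (intro pigeonhole) simp
  then obtain x y where xy: "x \<le> n" "y \<le> n" "x \<noteq> y" "stf x = stf y"
    unfolding inj_on_def by auto
  obtain i i' where ii: "i < i'" "i' \<le> n" "stf i = stf i'"
  proof (cases "x < y")
    case True then show ?thesis using that xy by blast
  next
    case False then have "y < x" using xy by simp
    then show ?thesis using that xy by metis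
  qed
  define a where "a = i' - i"
  define X where "X = U @ pw v i"
  have a0: "0 < a" and an: "a \<le> n" using ii unfolding a_def by auto
  have XY: "X @ pw v a = U @ pw v i'"
    unfolding X_def a_def using ii by (simp add: pw_add[symmetric])
  have eqst: "st t s0 (X @ pw v a) = st t s0 X"
  proof -
    have "st t s0 (X @ pw v a) = stf i'" unfolding stf_def XY by (rule refl)
    also have "\<dots> = stf i" using ii(3) by simp
    also have "\<dots> = st t s0 X" unfolding stf_def X_def by (rule refl)
    finally show ?thesis .
  qed
  define C where "C = trans_out_prefix t out (st t s0 X) (conc (pw v a) (\<lambda>_. False)) (length (pw v a))"
  have C: "C \<noteq> []"
    unfolding C_def by (rule cycle_nonempty[OF c pw_ne[OF v a0] eqst])
  have prY: "pr t out s0 (X @ pw v a) = pr t out s0 X @ C"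
    unfolding C_def by (rule pr_app)
  have R: "Rel f (U @ pw v i) (pw v a) (pr t out s0 X) (pw C 1)"
    unfolding Rel_def
  proof
    fix \<psi>
    show "\<exists>T. f (conc (U @ pw v i) \<psi>) = conc (pr t out s0 X) T \<and>
         f (conc ((U @ pw v i) @ pw v a) \<psi>) = conc (pr t out s0 X @ pw C 1) T"
      using same_state[OF c eqst[symmetric], of \<psi>] prY by (simp add: X_def pw_one)
  qed
  have sm: "smooth (card S) a" using smooth_le[OF a0 an] unfolding n_def .
  show "\<exists>m a b U' w. 0 < a \<and> 0 < b \<and> smooth (card S) a \<and> w \<noteq> [] \<and> Rel f (U @ pw v m) (pw v a) U' (pw w b)"
    apply (rule exI[of _ i])
    apply (rule exI[of _ a])
    apply (rule exI[of _ 1])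
    apply (rule exI[of _ "pr t out s0 X"])
    apply (rule exI[of _ C])
    using a0 sm C R by simp
qed



lemma sw_conc: "switch_every p (conc (replicate k False) \<psi>) j =
   ((p dvd j + 1) \<noteq> (\<not> j < k \<and> \<psi> (j - k)))"
  by (auto simp: switch_every_def conc_def)

lemma not_good:
  assumes p: "prime p" and Np: "N < p"
  shows "\<not> Good N (switch_every p)"
proof
  assume G: "Good N (switch_every p)"
  have v: "[False] \<noteq> []" by simp
  obtain m a b U' w where a0: "0 < a" and sm: "smooth N a"
    and R: "Rel (switch_every p) ([] @ pw [False] m) (pw [False] a) U' (pw w b)"
    using GoodE[OF G v, of "[]"] by metis
  have R': "Rel (switch_every p) (replicate m False) (replicate a False) U' (pw w b)"
    using R by (simp add: pw_def)
  define L where "L = length U'"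
  define B where "B = length (pw w b)"
  have key: "switch_every p (conc (replicate (m + a) False) \<psi>) (L + B + i) = switch_every p (conc (replicate m False) \<psi>) (L + i)" for \<psi> i
  proof -
    obtain T where T1: "switch_every p (conc (replicate m False) \<psi>) = conc U' T"
      and T2: "switch_every p (conc (replicate m False @ replicate a False) \<psi>) = conc (U' @ pw w b) T"
      by (rule RelE[OF R'])
    have "switch_every p (conc (replicate (m + a) False) \<psi>) (L + B + i) = T i"
      using T2 by (simp add: replicate_add conc_def L_def B_def)
    moreover have "switch_every p (conc (replicate m False) \<psi>) (L + i) = T i"
      using T1 by (simp add: conc_def L_def)
    ultimately show ?thesis by simp
  qed
  have p1: "1 \<le> p" using p prime_ge_1_nat by blast
  have d0: "(p dvd L + B + i + 1) = (p dvd L + i + 1)" for i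
    using key[of "\<lambda>_. False" i] by (simp add: sw_conc)
  define i0 where "i0 = p * (L + 1) - (L + 1)"
  have "L + 1 \<le> p * (L + 1)" using mult_le_mono1[OF p1, of "L + 1"] by simp
  then have "L + i0 + 1 = p * (L + 1)" unfolding i0_def by simp
  then have "p dvd L + i0 + 1" by simp
  then have "p dvd (L + i0 + 1) + B" using d0[of i0] by (simp add: add.commute add.left_commute)
  then have pB: "p dvd B" using \<open>p dvd L + i0 + 1\<close> dvd_add_right_iff by blast
  have pe: "(p dvd L + B + m + 1) = (p dvd L + m + 1)"
  proof -
    have "L + B + m + 1 = (L + m + 1) + B" by simp
    then show ?thesis using dvd_add_left_iff[OF pB, of "L + m + 1"] by metis
  qed
  note k1 = key[of "\<lambda>j. j = L" m]
  have rhs: "switch_every p (conc (replicate m False) (\<lambda>j. j = L)) (L + m) = (\<not> p dvd L + m + 1)"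
    by (simp add: sw_conc)
  have lhs: "switch_every p (conc (replicate (m + a) False) (\<lambda>j. j = L)) (L + B + m) =
     ((p dvd L + m + 1) \<noteq> (\<not> L + B + m < m + a \<and> L + B + m - (m + a) = L))"
    using pe by (simp add: sw_conc)
  have "\<not> L + B + m < m + a \<and> L + B + m - (m + a) = L"
    using k1 lhs rhs by (cases "p dvd L + m + 1") auto
  then have "B = a" by linarith
  then have "p dvd a" using pB by simp
  then have "p \<le> N" using sm p unfolding smooth_def by blast
  then show False using Np by simp
qed



lemma Good_mono:
  assumes g: "Good N f" and le: "N \<le> N'"
  shows "Good N' f"
  unfolding Good_def
proof (intro allI impI)
  fix U v :: "bool list" assume v: "v \<noteq> []"
  obtain m a b U' w where h: "0 < a" "0 < b" "smooth N a" "w \<noteq> []" "Rel f (U @ pw v m) (pw v a) U' (pw w b)"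
    by (rule GoodE[OF g v, of U])
  have s: "smooth N' a" using smooth_mono[OF h(3) le] .
  show "\<exists>m a b U' w. 0 < a \<and> 0 < b \<and> smooth N' a \<and> w \<noteq> [] \<and> Rel f (U @ pw v m) (pw v a) U' (pw w b)"
    apply (rule exI[of _ m])
    apply (rule exI[of _ a])
    apply (rule exI[of _ b])
    apply (rule exI[of _ U'])
    apply (rule exI[of _ w])
    using h s by simp
qed

theorem theorem3p1:
  assumes "is_submonoid_of_R M"
    and "infinite {p :: nat. prime p \<and> switch_every p \<in> M}"
  shows "\<not> finitely_generated_monoid M"
proof
  assume "finitely_generated_monoid M"
  then obtain G where G: "finite G" "G \<subseteq> M" "monoid_generated G = M"
    unfolding finitely_generated_monoid_def by blast
  have ex: "\<forall>g\<in>G. \<exists>N. Good N g"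
  proof
    fix g assume "g \<in> G"
    then have "g \<in> rational_homeos" using G(2) assms(1) unfolding is_submonoid_of_R_def by blast
    then obtain S s0 t out where "transducer_computes S s0 t out g"
      unfolding rational_homeos_def by blast
    then show "\<exists>N. Good N g" using computes_good by blast
  qed
  then obtain Nf where Nf: "\<forall>g\<in>G. Good (Nf g) g" by metis
  define N where "N = Max (insert 0 (Nf ` G))"
  have GN: "Good N g" if "g \<in> G" for g
  proof -
    have "Nf g \<le> N" unfolding N_def using G(1) that by (intro Max_ge) auto
    then show ?thesis using Good_mono Nf that by blast
  qed
  have MG: "Good N h" if "h \<in> monoid_generated G" for h
    using that
  proof (induction rule: monoid_generated.induct)
    case gen_id then show ?case by (rule Good_id)
  next
    case (gen_comp g h) then show ?case using GN Good_comp by blast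
  qed
  from assms(2) obtain p where p: "p > N" "prime p \<and> switch_every p \<in> M"
    unfolding infinite_nat_iff_unbounded by blast
  then have "Good N (switch_every p)" using MG G(3) by blast
  then show False using not_good[of p N] p by blast
qed

end
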